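(* Let $\ell\ge 1$ be an integer and let $q_1,\dots,q_\ell:\mathbb{N}\to\mathbb{N}$ be increasing functions taking integer values on the integers, with $l\le q_1(l)<q_2(l)<\dots<q_\ell(l)$ for all $l\ge 1$. For each $n\ge1$ let $p_n\in(0,1)$ and let $\xi^{(n)}_1,\xi^{(n)}_2,\xi^{(n)}_3,\dots$ be independent random variables with $P\{\xi^{(n)}_i=1\}=p_n=1-P\{\xi^{(n)}_i=0\}$. Set $$S_n=\sum_{l=1}^n \xi^{(n)}_{q_1(l)}\xi^{(n)}_{q_2(l)}\cdots\xi^{(n)}_{q_\ell(l)},\qquad \lambda_n=np_n^\ell .$$ Then for every $\lambda>0$ and every $n\ge1$, $$\sup_{\Gamma\subset\mathbb{Z}_+}\big|P\{S_n\in\Gamma\}-P_\lambda(\Gamma)\big|\le (2\ell^2+1)p_n+2|\lambda-\lambda_n|e^{\max(\lambda,\lambda_n)},$$ where $P_\lambda(\Gamma)=\sum_{l\in\Gamma}e^{-\lambda}\lambda^l/l!$. In particular, if $\lim_{n\to\infty}np_n^\ell=\lambda>0$, the right-hand side tends to $0$ and $S_n$ converges in distribution to a Poisson random variable with parameter $\lambda$.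
   Context: $\mathbb{Z}_+$ denotes the set of nonnegative integers; $P_\lambda(\Gamma)$ is the probability assigned to $\Gamma\subset\mathbb{Z}_+$ by the Poisson distribution with parameter $\lambda$. *)

theory Defs
  imports "HOL-Probability.Probability"
begin

definition S_stat :: "nat \<Rightarrow> (nat \<Rightarrow> nat \<Rightarrow> nat) \<Rightarrow> (nat \<Rightarrow> 'a \<Rightarrow> nat) \<Rightarrow> nat \<Rightarrow> 'a \<Rightarrow> nat" where
  "S_stat ell q \<xi> n \<omega> = (\<Sum>l=1..n. \<Prod>j=1..ell. \<xi> (q j l) \<omega>)"

definition poisson_prob :: "real \<Rightarrow> nat set \<Rightarrow> real" where
  "poisson_prob lam \<Gamma> = measure_pmf.prob (poisson_pmf lam) \<Gamma>"

end

theory Submission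
  imports Defs
begin


definition Qq :: "real \<Rightarrow> nat \<Rightarrow> real" where
  "Qq \<mu> k = (\<Sum>j\<le>k. \<mu>^j / fact j)"
definition Fq :: "real \<Rightarrow> nat set \<Rightarrow> nat \<Rightarrow> real" where
  "Fq \<mu> \<Gamma> k = (\<Sum>j\<le>k. if j \<in> \<Gamma> then \<mu>^j / fact j else 0)"
definition Gs :: "real \<Rightarrow> nat set \<Rightarrow> real \<Rightarrow> nat \<Rightarrow> real" where
  "Gs \<mu> \<Gamma> a k = (case k of 0 \<Rightarrow> 0 | Suc m \<Rightarrow> fact m / \<mu>^(Suc m) * (Fq \<mu> \<Gamma> m - a * Qq \<mu> m))"

lemma stein_eq:
  assumes "\<mu> > 0"
  shows "\<mu> * Gs \<mu> \<Gamma> a (Suc k) - real k * Gs \<mu> \<Gamma> a k = (if k \<in> \<Gamma> then 1 else 0) - a"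
proof (cases k)
  case 0 then show ?thesis using assms by (simp add: Gs_def Fq_def Qq_def)
next
  case (Suc m)
  have F: "Fq \<mu> \<Gamma> (Suc m) = Fq \<mu> \<Gamma> m + (if Suc m \<in> \<Gamma> then \<mu>^Suc m / fact (Suc m) else 0)"
    by (simp add: Fq_def)
  have Q: "Qq \<mu> (Suc m) = Qq \<mu> m + \<mu>^Suc m / fact (Suc m)"
    by (simp add: Qq_def)
  have "\<mu> * Gs \<mu> \<Gamma> a (Suc k) - real k * Gs \<mu> \<Gamma> a k
      = fact (Suc m) / \<mu>^(Suc m) * (Fq \<mu> \<Gamma> (Suc m) - Fq \<mu> \<Gamma> m - a * (Qq \<mu> (Suc m) - Qq \<mu> m))"
    using assms unfolding Suc by (simp add: Gs_def field_simps)
  also have "\<dots> = (if k \<in> \<Gamma> then 1 else 0) - a"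
  proof -
    have fs: "fact (Suc m) = real (Suc m) * fact m" by simp
    have "fact m > (0::real)" by simp
    moreover have "\<And>f r::real. f > 0 \<Longrightarrow> r > 0 \<Longrightarrow> r * f / \<mu> ^ Suc m *
      ((if Suc m \<in> \<Gamma> then \<mu> ^ Suc m / (r * f) else 0) - a * (\<mu> ^ Suc m / (r * f))) =
      (if Suc m \<in> \<Gamma> then 1 else 0) - a"
      using assms by (auto simp: field_simps)
    ultimately show ?thesis using assms unfolding F Q Suc fs
      by (metis (no_types, lifting) add_diff_cancel_left' diff_diff_eq2 of_nat_0_less_iff zero_less_Suc)
  qed
  finally show ?thesis .
qed

lemma Qq_ineq:
  assumes "\<mu> > 0"
  shows "\<mu> * Qq \<mu> m \<le> (m+1) * Qq \<mu> (m+1)"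
proof (induction m)
  case 0 then show ?case by (simp add: Qq_def)
next
  case (Suc m)
  have Q: "Qq \<mu> (Suc m + 1) = Qq \<mu> (m+1) + \<mu>^(m+2) / fact (m+2)"
    by (simp add: Qq_def)
  have Q1: "Qq \<mu> (Suc m) = Qq \<mu> m + \<mu>^(m+1) / fact (m+1)"
    by (simp add: Qq_def)
  have pos: "Qq \<mu> (m+1) \<ge> 0" using assms unfolding Qq_def by (intro sum_nonneg) auto
  have e: "\<mu> * (\<mu>^(m+1) / fact (m+1)) = (m+2) * (\<mu>^(m+2) / fact (m+2))"
  proof -
    have fs: "fact (m+2) = real (m+2) * fact (m+1)" by (simp add: numeral_2_eq_2)
    have "fact (m+1) > (0::real)" by simp
    moreover have "\<And>f r::real. f > 0 \<Longrightarrow> r > 0 \<Longrightarrow> \<mu> * (\<mu>^(m+1) / f) = r * (\<mu>^(m+2) / (r * f))"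
      by (simp add: field_simps power2_eq_square)
    ultimately show ?thesis unfolding fs by (metis of_nat_0_less_iff zero_less_Suc add_2_eq_Suc')
  qed
  have "\<mu> * Qq \<mu> (Suc m) = \<mu> * Qq \<mu> m + (m+2) * (\<mu>^(m+2) / fact (m+2))"
    unfolding Q1 e[symmetric] by (simp add: algebra_simps)
  also have "\<dots> \<le> (m+1) * Qq \<mu> (m+1) + (m+2) * (\<mu>^(m+2) / fact (m+2))"
    using Suc by (simp add: add.commute)
  also have "\<dots> \<le> (Suc m + 1) * Qq \<mu> (Suc m + 1)"
    unfolding Q using pos by (simp add: algebra_simps)
  finally show ?case by simp
qed


lemma exp_sums_real: "(\<lambda>j. x^j / fact j) sums exp (x::real)"
  using exp_converges[of x] by (simp add: divide_inverse mult.commute)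

lemma Tt_sums: "(\<lambda>j. \<mu>^(j + Suc m) / fact (j + Suc m)) sums (exp \<mu> - Qq \<mu> m)"
proof -
  have "(\<lambda>j. \<mu>^(j + Suc m) / fact (j + Suc m)) sums (exp \<mu> - (\<Sum>i<Suc m. \<mu>^i / fact i))"
    by (rule sums_split_initial_segment[OF exp_sums_real])
  then show ?thesis by (simp add: Qq_def lessThan_Suc_atMost)
qed

lemma Tt_nonneg: "\<mu> \<ge> 0 \<Longrightarrow> exp \<mu> - Qq \<mu> m \<ge> 0"
  by (rule sums_le[OF _ sums_zero Tt_sums[of \<mu> m]]) simp

lemma Tt_ineq:
  assumes "\<mu> > 0"
  shows "(real m + 1) * (exp \<mu> - Qq \<mu> (m+1)) \<le> \<mu> * (exp \<mu> - Qq \<mu> m)"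
proof -
  have s1: "(\<lambda>j. (real m + 1) * (\<mu>^(j + Suc (Suc m)) / fact (j + Suc (Suc m)))) sums ((real m + 1) * (exp \<mu> - Qq \<mu> (m+1)))"
    using sums_mult[OF Tt_sums[of \<mu> "Suc m"], of "real m + 1"] by simp
  have s2: "(\<lambda>j. \<mu> * (\<mu>^(j + Suc m) / fact (j + Suc m))) sums (\<mu> * (exp \<mu> - Qq \<mu> m))"
    using sums_mult[OF Tt_sums[of \<mu> m], of \<mu>] by simp
  have trm: "(real m + 1) * (\<mu>^(j + Suc (Suc m)) / fact (j + Suc (Suc m))) \<le> \<mu> * (\<mu>^(j + Suc m) / fact (j + Suc m))" for j
  proof -
    have fs: "fact (j + Suc (Suc m)) = real (j + Suc (Suc m)) * fact (j + Suc m)" by simp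
    have fp: "fact (j + Suc m) > (0::real)" by simp
    have pw: "\<mu>^(j + Suc (Suc m)) = \<mu> * \<mu>^(j + Suc m)" by simp
    have le: "real m + 1 \<le> real (j + Suc (Suc m))" by simp
    have gen: "\<And>f r c x::real. f > 0 \<Longrightarrow> c \<le> r \<Longrightarrow> 0 < r \<Longrightarrow> 0 \<le> x \<Longrightarrow> c * (\<mu> * x / (r * f)) \<le> \<mu> * (x / f)"
    proof -
      fix f r c x :: real assume h: "f > 0" "c \<le> r" "0 < r" "0 \<le> x"
      have "c * (\<mu> * x / (r * f)) = (c / r) * (\<mu> * (x / f))" by (simp add: field_simps)
      also have "\<dots> \<le> 1 * (\<mu> * (x / f))"
        using h assms by (intro mult_right_mono) (auto simp: divide_le_eq_1)
      finally show "c * (\<mu> * x / (r * f)) \<le> \<mu> * (x / f)" by simp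
    qed
    show ?thesis unfolding fs pw
      by (rule gen[OF fp le]) (use assms in auto)
  qed
  show ?thesis by (rule sums_le[OF _ s1 s2]) (rule trm)
qed


lemma delta_abstract:
  fixes \<mu> c c' u r F R t Q TT E a :: real
  assumes mu: "\<mu> > 0" and c: "c \<ge> 0" and r: "r > 0"
    and c': "c' = c * r / \<mu>" and c'u: "c' * u = 1 / \<mu>" and cu: "c * u = 1 / r"
    and F: "F \<ge> 0" and R: "R \<ge> 0" and t: "0 \<le> t" "t \<le> u" and Q: "Q \<ge> 0" and TT: "TT \<ge> 0"
    and E: "E = Q + u + TT" and Tineq: "r * TT \<le> \<mu> * (TT + u)" and Qineq: "\<mu> * Q \<le> r * (Q + u)"
    and Ea: "E * a = F + t + R" and Epos: "E > 0"
  shows "c' * (F + t - a * (Q + u)) - c * (F - a * Q) \<le> 1 / \<mu>"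
proof -
  have id: "E * (c' * (F + t - a * (Q + u)) - c * (F - a * Q))
      = F * (c' * TT - c * (TT + u)) + t * (c' * TT + c * Q) + R * (c * Q - c' * (Q + u))"
  proof -
    have "E * (c' * (F + t - a * (Q + u)) - c * (F - a * Q))
       = E * c' * (F + t) - (E * a) * c' * (Q + u) - E * c * F + (E * a) * c * Q"
      by (simp add: algebra_simps)
    also have "\<dots> = F * (c' * TT - c * (TT + u)) + t * (c' * TT + c * Q) + R * (c * Q - c' * (Q + u))"
      unfolding Ea by (simp add: E algebra_simps)
    finally show ?thesis .
  qed
  have a1: "c' * TT - c * (TT + u) \<le> 0"
  proof -
    have "c' * TT = c * (r * TT) / \<mu>" using c' by simp
    also have "\<dots> \<le> c * (\<mu> * (TT + u)) / \<mu>"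
      using Tineq c mu by (intro divide_right_mono mult_left_mono) auto
    also have "\<dots> = c * (TT + u)" using mu by simp
    finally show ?thesis by simp
  qed
  have a2: "c * Q - c' * (Q + u) \<le> 0"
  proof -
    have "c * Q = c * (\<mu> * Q) / \<mu>" using mu by simp
    also have "\<dots> \<le> c * (r * (Q + u)) / \<mu>"
      using Qineq c mu by (intro divide_right_mono mult_left_mono) auto
    also have "\<dots> = c' * (Q + u)" using c' by simp
    finally show ?thesis by simp
  qed
  have "c' \<ge> 0" using c' c r mu by simp
  then have bpos: "c' * TT + c * Q \<ge> 0"
    using c TT Q by simp
  have a3: "t * (c' * TT + c * Q) \<le> E / \<mu>"
  proof -
    have "t * (c' * TT + c * Q) \<le> u * (c' * TT + c * Q)"
      using t bpos by (intro mult_right_mono) auto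
    also have "\<dots> = TT / \<mu> + Q / r"
      using c'u cu by (simp add: algebra_simps)
    also have "Q / r \<le> (Q + u) / \<mu>"
      using Qineq mu r by (simp add: field_simps mult.commute)
    then have "TT / \<mu> + Q / r \<le> TT / \<mu> + (Q + u) / \<mu>" by simp
    also have "\<dots> = E / \<mu>" using E by (simp add: add_divide_distrib)
    finally show ?thesis by simp
  qed
  have "E * (c' * (F + t - a * (Q + u)) - c * (F - a * Q)) \<le> E * (1 / \<mu>)"
  proof -
    have "F * (c' * TT - c * (TT + u)) \<le> 0" using F a1 by (simp add: mult_nonneg_nonpos)
    moreover have "R * (c * Q - c' * (Q + u)) \<le> 0" using R a2 by (simp add: mult_nonneg_nonpos)
    ultimately show ?thesis unfolding id using a3 by simp
  qed
  then show ?thesis using Epos by (rule mult_left_le_imp_le)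
qed


lemma Gs_delta_upper:
  assumes mu: "\<mu> > 0" and h: "Fq \<mu> \<Gamma> (Suc m) \<le> exp \<mu> * a"
  shows "Gs \<mu> \<Gamma> a (Suc (Suc m)) - Gs \<mu> \<Gamma> a (Suc m) \<le> 1 / \<mu>"
proof -
  define f :: real where "f = fact m"
  define r :: real where "r = real m + 1"
  define c where "c = f / \<mu>^(Suc m)"
  define c' where "c' = (r * f) / \<mu>^(Suc (Suc m))"
  define u where "u = \<mu>^(Suc m) / (r * f)"
  define t where "t = (if Suc m \<in> \<Gamma> then u else 0)"
  define F where "F = Fq \<mu> \<Gamma> m"
  define Q where "Q = Qq \<mu> m"
  define T1 where "T1 = exp \<mu> - Qq \<mu> (Suc m)"
  define R where "R = exp \<mu> * a - F - t"
  have fpos: "f > 0" unfolding f_def by simp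
  have rpos: "r > 0" unfolding r_def by simp
  have factS: "fact (Suc m) = r * f" unfolding r_def f_def by (simp add: algebra_simps)
  have FS: "Fq \<mu> \<Gamma> (Suc m) = F + t" unfolding F_def t_def u_def Fq_def factS[symmetric] by simp
  have QS: "Qq \<mu> (Suc m) = Q + u" unfolding Q_def u_def Qq_def factS[symmetric] by simp
  have G1: "Gs \<mu> \<Gamma> a (Suc m) = c * (F - a * Q)" unfolding Gs_def c_def F_def Q_def f_def by simp
  have G2: "Gs \<mu> \<Gamma> a (Suc (Suc m)) = c' * (F + t - a * (Q + u))"
    unfolding Gs_def c'_def FS[symmetric] QS[symmetric] factS[symmetric] by simp
  show ?thesis unfolding G1 G2
  proof (rule delta_abstract[where r = r and R = R and TT = T1 and E = "exp \<mu>"])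
    show "\<mu> > 0" "c \<ge> 0" "r > 0" using mu fpos rpos unfolding c_def by auto
    show "c' = c * r / \<mu>" unfolding c'_def c_def using mu by (simp add: field_simps)
    show "c' * u = 1 / \<mu>" unfolding c'_def u_def using mu fpos rpos by (simp add: field_simps)
    show "c * u = 1 / r" unfolding c_def u_def using mu fpos rpos by (simp add: field_simps)
    show "F \<ge> 0" unfolding F_def Fq_def using mu by (intro sum_nonneg) auto
    show "R \<ge> 0" unfolding R_def using h FS by simp
    show "0 \<le> t" "t \<le> u" unfolding t_def u_def using mu fpos rpos by auto
    show "Q \<ge> 0" unfolding Q_def Qq_def using mu by (intro sum_nonneg) auto
    show "T1 \<ge> 0" unfolding T1_def using mu by (intro Tt_nonneg) simp
    show "exp \<mu> = Q + u + T1" unfolding T1_def QS by simp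
    show "r * T1 \<le> \<mu> * (T1 + u)"
      using Tt_ineq[OF mu, of m] QS unfolding T1_def r_def Q_def by (simp add: algebra_simps)
    show "\<mu> * Q \<le> r * (Q + u)"
      using Qq_ineq[OF mu, of m] QS unfolding r_def Q_def by (simp add: algebra_simps)
    show "exp \<mu> * a = F + t + R" unfolding R_def by simp
    show "exp \<mu> > 0" by simp
  qed
qed

lemma Fq_compl: "Fq \<mu> (-\<Gamma>) k = Qq \<mu> k - Fq \<mu> \<Gamma> k"
  unfolding Fq_def Qq_def sum_subtractf[symmetric] by (rule sum.cong) auto

lemma Gs_compl: "Gs \<mu> (-\<Gamma>) (1 - a) k = - Gs \<mu> \<Gamma> a k"
  by (cases k) (simp_all add: Gs_def Fq_compl algebra_simps)

lemma Gs_delta: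
  assumes mu: "\<mu> > 0" and h1: "Fq \<mu> \<Gamma> (Suc m) \<le> exp \<mu> * a"
    and h2: "Fq \<mu> (-\<Gamma>) (Suc m) \<le> exp \<mu> * (1 - a)"
  shows "\<bar>Gs \<mu> \<Gamma> a (Suc (Suc m)) - Gs \<mu> \<Gamma> a (Suc m)\<bar> \<le> 1 / \<mu>"
  using Gs_delta_upper[OF mu h1] Gs_delta_upper[OF mu h2] unfolding Gs_compl by linarith

lemma Lip_nat:
  fixes G :: "nat \<Rightarrow> real"
  assumes d: "\<And>m. \<bar>G (Suc (Suc m)) - G (Suc m)\<bar> \<le> D"
  shows "\<bar>G (Suc x + k) - G (Suc x)\<bar> \<le> D * k"
proof (induction k)
  case 0 then show ?case by simp
next
  case (Suc k)
  have "\<bar>G (Suc x + Suc k) - G (Suc x)\<bar> \<le> \<bar>G (Suc (Suc (x + k))) - G (Suc (x + k))\<bar> + \<bar>G (Suc x + k) - G (Suc x)\<bar>"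
    by simp
  also have "\<dots> \<le> D + D * k" using d[of "x + k"] Suc by simp
  finally show ?case by (simp add: algebra_simps)
qed

lemma Lip_nat2:
  fixes G :: "nat \<Rightarrow> real"
  assumes d: "\<And>m. \<bar>G (Suc (Suc m)) - G (Suc m)\<bar> \<le> D"
  shows "\<bar>G (Suc x + k) - G (Suc x)\<bar> \<le> D * k" "\<bar>G (Suc x) - G (Suc x + k)\<bar> \<le> D * k"
  using Lip_nat[of G D, OF d, of x k] by (simp_all add: abs_minus_commute)


definition pf :: "real \<Rightarrow> nat \<Rightarrow> real" where
  "pf r k = r^k / fact k * exp (-r)"
definition bnd :: "real \<Rightarrow> nat \<Rightarrow> real" where
  "bnd M k = (real k * M^(k-1) + M^k) / fact k"

lemma pf_deriv:
  "((\<lambda>r. pf r k) has_real_derivative ((real k * r^(k-1) - r^k) / fact k * exp (-r))) (at r)"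
  unfolding pf_def
  by (rule derivative_eq_intros refl | simp)+ (simp add: field_simps)

lemma pf_mvt_ord:
  assumes "0 \<le> x" "x < y" "y \<le> M"
  shows "\<bar>pf y k - pf x k\<bar> \<le> (y - x) * bnd M k"
proof -
  obtain z where z: "x < z" "z < y" "pf y k - pf x k = (y - x) * ((real k * z^(k-1) - z^k) / fact k * exp (-z))"
    using MVT2[OF assms(2), of "\<lambda>r. pf r k" "\<lambda>r. (real k * r^(k-1) - r^k) / fact k * exp (-r)"] pf_deriv by blast
  have zp: "0 \<le> z" "z \<le> M" using z assms by auto
  have "\<bar>(real k * z^(k-1) - z^k) / fact k * exp (-z)\<bar> \<le> (real k * z^(k-1) + z^k) / fact k * 1"
  proof -
    have "\<bar>(real k * z^(k-1) - z^k) / fact k * exp (-z)\<bar> = \<bar>real k * z^(k-1) - z^k\<bar> / fact k * exp (-z)"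
      by (simp add: abs_mult)
    also have "\<dots> \<le> (real k * z^(k-1) + z^k) / fact k * exp (-z)"
    proof -
      have "0 \<le> real k * z^(k-1)" "0 \<le> z^k" using zp by auto
      then have "\<bar>real k * z^(k-1) - z^k\<bar> \<le> real k * z^(k-1) + z^k" by linarith
      then show ?thesis by (intro mult_right_mono divide_right_mono) auto
    qed
    also have "\<dots> \<le> (real k * z^(k-1) + z^k) / fact k * 1"
      using zp by (intro mult_left_mono) auto
    finally show ?thesis .
  qed
  also have "\<dots> \<le> bnd M k"
    unfolding bnd_def using zp
    by (simp add: divide_right_mono add_mono mult_left_mono power_mono)
  finally have "\<bar>(real k * z^(k-1) - z^k) / fact k * exp (-z)\<bar> \<le> bnd M k" .
  then have "(y - x) * \<bar>(real k * z^(k-1) - z^k) / fact k * exp (-z)\<bar> \<le> (y - x) * bnd M k"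
    using z by (intro mult_left_mono) auto
  moreover have "\<bar>pf y k - pf x k\<bar> = (y - x) * \<bar>(real k * z^(k-1) - z^k) / fact k * exp (-z)\<bar>"
    unfolding z(3) abs_mult using z by simp
  ultimately show ?thesis by simp
qed

lemma pf_mvt:
  assumes "0 \<le> x" "0 \<le> y" "x \<le> M" "y \<le> M"
  shows "\<bar>pf y k - pf x k\<bar> \<le> \<bar>y - x\<bar> * bnd M k"
proof (cases x y rule: linorder_cases)
  case less then show ?thesis using pf_mvt_ord[of x y M k] assms by simp
next
  case equal then show ?thesis by simp
next
  case greater then show ?thesis using pf_mvt_ord[of y x M k] assms by (simp add: abs_minus_commute)
qed

lemma bnd_sums: "bnd M sums (2 * exp M)"
proof -
  have s1: "(\<lambda>k. M^k / fact k) sums exp M" by (rule exp_sums_real)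
  have "(\<lambda>k. real (Suc k) * M^(Suc k - 1) / fact (Suc k)) sums exp M"
    using s1 by (simp del: of_nat_Suc add: field_simps)
  then have s2: "(\<lambda>k. real k * M^(k-1) / fact k) sums exp M"
    by (subst (asm) sums_Suc_iff) simp
  have "(\<lambda>k. real k * M^(k-1) / fact k + M^k / fact k) sums (exp M + exp M)"
    by (rule sums_add[OF s2 s1])
  then show ?thesis unfolding bnd_def by (simp add: add_divide_distrib)
qed

lemma poisson_prob_suminf:
  assumes "r > 0"
  shows "poisson_prob r \<Gamma> = (\<Sum>k. if k \<in> \<Gamma> then pf r k else 0)"
  unfolding poisson_prob_def measure_pmf_conv_infsetsum infsetsum_nat[OF pmf_abs_summable] pmf_poisson[OF assms] pf_def
  by simp


lemma poisson_diff:
  assumes mu: "\<mu> > 0" and la: "lam > 0"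
  shows "\<bar>poisson_prob \<mu> \<Gamma> - poisson_prob lam \<Gamma>\<bar> \<le> 2 * \<bar>lam - \<mu>\<bar> * exp (max lam \<mu>)"
proof -
  define M where "M = max lam \<mu>"
  define h where "h k = (if k \<in> \<Gamma> then pf \<mu> k - pf lam k else 0)" for k
  have hb: "\<bar>h k\<bar> \<le> \<bar>lam - \<mu>\<bar> * bnd M k" for k
  proof -
    have "\<bar>pf \<mu> k - pf lam k\<bar> \<le> \<bar>\<mu> - lam\<bar> * bnd M k"
      using mu la by (intro pf_mvt) (auto simp: M_def)
    moreover have "0 \<le> \<bar>lam - \<mu>\<bar> * bnd M k"
      using mu la by (auto simp: bnd_def M_def intro!: mult_nonneg_nonneg divide_nonneg_pos add_nonneg_nonneg)
    ultimately show ?thesis by (auto simp: h_def abs_minus_commute)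
  qed
  have sb: "summable (\<lambda>k. \<bar>lam - \<mu>\<bar> * bnd M k)"
    using bnd_sums[of M] by (intro summable_mult) (auto simp: sums_iff)
  have sh: "summable (\<lambda>k. \<bar>h k\<bar>)"
    by (rule summable_rabs_comparison_test[OF _ sb]) (use hb in auto)
  have pfb: "\<bar>(if k \<in> \<Gamma> then pf r k else 0)\<bar> \<le> r^k / fact k" if "r > 0" for r k
    using that by (auto simp: pf_def field_simps)
  have sp: "summable (\<lambda>k. if k \<in> \<Gamma> then pf r k else 0)" if "r > 0" for r
  proof -
    have "summable (\<lambda>k. r^k / fact k)" using exp_sums_real[of r] by (auto simp: sums_iff)
    then show ?thesis by (rule summable_comparison_test'[where N=0]) (use pfb[OF that] in auto)
  qed
  have "poisson_prob \<mu> \<Gamma> - poisson_prob lam \<Gamma> = (\<Sum>k. h k)"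
    unfolding poisson_prob_suminf[OF mu] poisson_prob_suminf[OF la] h_def
    by (subst suminf_diff[OF sp[OF mu] sp[OF la]]) (auto intro!: suminf_cong)
  then have "\<bar>poisson_prob \<mu> \<Gamma> - poisson_prob lam \<Gamma>\<bar> \<le> (\<Sum>k. \<bar>h k\<bar>)"
    using summable_rabs[OF sh] by simp
  also have "\<dots> \<le> (\<Sum>k. \<bar>lam - \<mu>\<bar> * bnd M k)"
    by (rule suminf_le[OF hb sh sb])
  also have "\<dots> = \<bar>lam - \<mu>\<bar> * (2 * exp M)"
    using sums_mult[OF bnd_sums[of M], of "\<bar>lam - \<mu>\<bar>"] by (simp add: sums_iff)
  finally show ?thesis by (simp add: M_def)
qed

lemma Fq_le_poisson:
  assumes mu: "\<mu> > 0"
  shows "Fq \<mu> \<Gamma> k \<le> exp \<mu> * poisson_prob \<mu> \<Gamma>"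
proof -
  have "Fq \<mu> \<Gamma> k = exp \<mu> * (\<Sum>j\<in>{..k} \<inter> \<Gamma>. pmf (poisson_pmf \<mu>) j)"
    unfolding Fq_def pmf_poisson[OF mu] sum_distrib_left
    by (subst sum.inter_restrict) (auto simp: exp_minus field_simps intro!: sum.cong)
  also have "(\<Sum>j\<in>{..k} \<inter> \<Gamma>. pmf (poisson_pmf \<mu>) j) = measure_pmf.prob (poisson_pmf \<mu>) ({..k} \<inter> \<Gamma>)"
    by (simp add: measure_measure_pmf_finite)
  also have "\<dots> \<le> poisson_prob \<mu> \<Gamma>"
    unfolding poisson_prob_def by (rule measure_pmf.finite_measure_mono) auto
  finally show ?thesis by (simp add: mult_left_mono)
qed

lemma poisson_compl: "\<mu> > 0 \<Longrightarrow> poisson_prob \<mu> (-\<Gamma>) = 1 - poisson_prob \<mu> \<Gamma>"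
  unfolding poisson_prob_def
  using measure_pmf.prob_compl[of \<Gamma> "poisson_pmf \<mu>"] by (simp add: Compl_eq_Diff_UNIV)

lemma Gs_poisson_delta:
  assumes mu: "\<mu> > 0"
  shows "\<bar>Gs \<mu> \<Gamma> (poisson_prob \<mu> \<Gamma>) (Suc (Suc m)) - Gs \<mu> \<Gamma> (poisson_prob \<mu> \<Gamma>) (Suc m)\<bar> \<le> 1 / \<mu>"
  by (rule Gs_delta[OF mu Fq_le_poisson[OF mu]])
     (use Fq_le_poisson[OF mu, of "-\<Gamma>" "Suc m"] poisson_compl[OF mu, of \<Gamma>] in simp)



lemma PiM_count_all_sets:
  assumes J: "finite J" and A: "A \<subseteq> space (PiM J (\<lambda>_. count_space (UNIV::nat set)))"
  shows "A \<in> sets (PiM J (\<lambda>_. count_space (UNIV::nat set)))"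
proof -
  have cnt: "countable A"
    using A by (rule countable_subset) (auto simp: space_PiM intro!: countable_PiE J)
  have "A = (\<Union>x\<in>A. {x})" by auto
  also have "\<dots> \<in> sets (PiM J (\<lambda>_. count_space (UNIV::nat set)))"
  proof (rule sets.countable_UN'[OF cnt], safe)
    fix x assume "x \<in> A"
    then have x: "x \<in> PiE J (\<lambda>_. UNIV)" using A by (auto simp: space_PiM)
    have "{x} = PiE J (\<lambda>i. {x i})"
      using x by (force simp: PiE_iff extensional_def fun_eq_iff)
    also have "\<dots> \<in> sets (PiM J (\<lambda>_. count_space (UNIV::nat set)))"
      by (rule sets_PiM_I_finite[OF J]) auto
    finally show "{x} \<in> sets (PiM J (\<lambda>_. count_space (UNIV::nat set)))" .
  qed
  finally show ?thesis .
qed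

lemma PiM_count_measurable:
  assumes J: "finite J" and F: "\<And>x. F x \<in> space N"
  shows "F \<in> measurable (PiM J (\<lambda>_. count_space (UNIV::nat set))) N"
  by (rule measurableI) (auto intro: PiM_count_all_sets[OF J] F)

definition eta :: "nat \<Rightarrow> nat" where "eta v = (if v = 1 then 1 else 0)"

lemma eta_01: "eta v = 0 \<or> eta v = 1" by (simp add: eta_def)
lemma eta_le1: "eta v \<le> 1" by (simp add: eta_def)

lemma prod_eta_01: "(\<Prod>i\<in>A. eta (x i)) = 0 \<or> (\<Prod>i\<in>A. eta (x i)) = 1"
proof (cases "finite A")
  case True then show ?thesis
    by (induction A rule: finite_induct) (auto simp: eta_def)
qed simp

lemma prod_eta_le1: "(\<Prod>i\<in>A. eta (x i)) \<le> 1"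
  using prod_eta_01[where A=A and x=x] by auto

lemma prod_eta_Un:
  assumes "finite A" "finite B"
  shows "(\<Prod>i\<in>A. eta (x i)) * (\<Prod>i\<in>B. eta (x i)) = (\<Prod>i\<in>A \<union> B. eta (x i))"
proof (cases "\<exists>i\<in>A \<union> B. eta (x i) = 0")
  case True
  then obtain i where i: "i \<in> A \<union> B" "eta (x i) = 0" by blast
  have "(\<Prod>i\<in>A \<union> B. eta (x i)) = 0" using i assms by (intro prod_zero) auto
  moreover have "(\<Prod>i\<in>A. eta (x i)) * (\<Prod>i\<in>B. eta (x i)) = 0"
    using i assms by (auto intro: prod_zero)
  ultimately show ?thesis by simp
next
  case False
  then have "\<forall>i\<in>A \<union> B. eta (x i) = 1" using eta_01 by blast
  then show ?thesis by simp
qed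

locale SS = prob_space M for M :: "'a measure" +
  fixes ell :: nat and q :: "nat \<Rightarrow> nat \<Rightarrow> nat" and p :: real and \<xi> :: "nat \<Rightarrow> 'a \<Rightarrow> nat"
    and n :: nat
  assumes ell: "ell \<ge> 1"
    and q_incr: "\<forall>j\<in>{1..ell}. strict_mono_on {1..} (q j)"
    and q_first: "\<forall>l\<ge>1. l \<le> q 1 l"
    and q_chain: "\<forall>l\<ge>1. \<forall>j\<in>{1..<ell}. q j l < q (Suc j) l"
    and p_pos: "0 < p" and p_lt1: "p < 1"
    and indep: "indep_vars (\<lambda>_. count_space UNIV) \<xi> {1..}"
    and bern: "\<forall>i\<ge>1. prob {\<omega> \<in> space M. \<xi> i \<omega> = 1} = p \<and> prob {\<omega> \<in> space M. \<xi> i \<omega> = 0} = 1 - p"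
    and n_pos: "n \<ge> 1"
begin

definition Ix :: "nat \<Rightarrow> nat set" where "Ix l = (\<lambda>j. q j l) ` {1..ell}"

lemma q_mono_j:
  assumes "l \<ge> 1" "1 \<le> j" "j < j'" "j' \<le> ell"
  shows "q j l < q j' l"
  using assms
proof (induction j' rule: less_induct)
  case (less j')
  then obtain j0 where j0: "j' = Suc j0" by (cases j') auto
  have c: "q j0 l < q j' l" using q_chain less.prems j0 by auto
  show ?case
  proof (cases "j = j0")
    case True then show ?thesis using c by simp
  next
    case False
    then have "q j l < q j0 l" using less.prems j0 by (intro less.IH) auto
    then show ?thesis using c by simp
  qed
qed

lemma q_ge1: assumes "l \<ge> 1" "j \<in> {1..ell}" shows "q j l \<ge> l"
proof (cases "j = 1")
  case True then show ?thesis using q_first assms by auto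
next
  case False then have "q 1 l < q j l" using assms by (intro q_mono_j) auto
  then show ?thesis using q_first assms by force
qed

lemma Ix_sub: "l \<ge> 1 \<Longrightarrow> Ix l \<subseteq> {1..}"
  unfolding Ix_def using q_ge1 by force

lemma Ix_finite: "finite (Ix l)" unfolding Ix_def by simp

lemma inj_j: "l \<ge> 1 \<Longrightarrow> inj_on (\<lambda>j. q j l) {1..ell}"
  unfolding inj_on_def
  by (metis atLeastAtMost_iff linorder_neqE_nat order_less_irrefl q_mono_j)

lemma card_Ix: "l \<ge> 1 \<Longrightarrow> card (Ix l) = ell"
  unfolding Ix_def using inj_j by (simp add: card_image)

lemma inj_l: "j \<in> {1..ell} \<Longrightarrow> inj_on (q j) {1..}"
  using q_incr strict_mono_on_imp_inj_on by blast

lemma Ix_inj: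
  assumes "k \<ge> 1" "l \<ge> 1" "Ix k = Ix l" shows "k = l"
proof -
  have "q 1 k \<in> Ix l" using assms ell unfolding Ix_def by force
  then obtain j where j: "j \<in> {1..ell}" "q 1 k = q j l" unfolding Ix_def by auto
  have "q 1 l \<in> Ix k" using assms ell unfolding Ix_def by force
  then obtain j' where j': "j' \<in> {1..ell}" "q 1 l = q j' k" unfolding Ix_def by auto
  have le: "q 1 m \<le> q i m" if "i \<in> {1..ell}" "m \<ge> 1" for i m
  proof (cases "i = 1")
    case False then show ?thesis using that q_mono_j[of m 1 i] by auto
  qed simp
  have le1: "q 1 l \<le> q j l" using j assms le by auto
  have le2: "q 1 k \<le> q j' k" using j' assms le by auto
  have "q 1 k = q 1 l" using le1 le2 j j' by simp
  then show ?thesis using inj_l[of 1] ell assms by (auto dest: inj_onD)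
qed


definition Bset :: "nat \<Rightarrow> nat set" where "Bset l = {k\<in>{1..n}. Ix k \<inter> Ix l \<noteq> {}}"

lemma card_Bset: assumes "l \<ge> 1" shows "card (Bset l) \<le> ell^2"
proof -
  define C where "C jj = {k\<in>{1..n}. q (fst jj) k = q (snd jj) l}" for jj
  have sub: "Bset l \<subseteq> (\<Union>jj\<in>{1..ell}\<times>{1..ell}. C jj)"
    unfolding Bset_def C_def Ix_def by force
  have c1: "card (C jj) \<le> 1" if "jj \<in> {1..ell}\<times>{1..ell}" for jj
  proof -
    have "inj_on (q (fst jj)) {1..}" using that by (intro inj_l) auto
    then have "\<forall>x\<in>C jj. \<forall>y\<in>C jj. x = y" unfolding C_def
      by (auto intro: inj_onD[where f="q (fst jj)" and A="{1..}"])
    then show ?thesis using card_le_Suc0_iff_eq[of "C jj"] by (simp add: C_def)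
  qed
  have "card (Bset l) \<le> card (\<Union>jj\<in>{1..ell}\<times>{1..ell}. C jj)"
    using sub by (intro card_mono) (auto simp: C_def)
  also have "\<dots> \<le> (\<Sum>jj\<in>{1..ell}\<times>{1..ell}. card (C jj))" by (rule card_UN_le) simp
  also have "\<dots> \<le> (\<Sum>jj\<in>{1..ell}\<times>{1..ell}. 1)" by (rule sum_mono) (rule c1)
  also have "\<dots> = ell^2" by (simp add: power2_eq_square)
  finally show ?thesis .
qed

lemma l_in_Bset: "l \<in> {1..n} \<Longrightarrow> l \<in> Bset l"
  unfolding Bset_def Ix_def using ell by auto

lemma Bset_sub: "Bset l \<subseteq> {1..n}" unfolding Bset_def by auto
lemma Bset_mem: "k \<in> Bset l \<Longrightarrow> 1 \<le> k \<and> k \<le> n" unfolding Bset_def by auto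

lemma rv_xi: "i \<ge> 1 \<Longrightarrow> \<xi> i \<in> measurable M (count_space UNIV)"
  using indep unfolding indep_vars_def by auto

lemma rv_dep:
  assumes J: "finite J" "J \<subseteq> {1..}" and dep: "\<And>x y. (\<forall>i\<in>J. x i = y i) \<Longrightarrow> F x = F y"
    and F: "\<And>x. F x \<in> space N"
  shows "(\<lambda>\<omega>. F (\<lambda>i. \<xi> i \<omega>)) \<in> measurable M N"
proof -
  have r: "(\<lambda>\<omega>. restrict (\<lambda>i. \<xi> i \<omega>) J) \<in> measurable M (PiM J (\<lambda>_. count_space UNIV))"
    using J rv_xi by (intro measurable_restrict) auto
  have "(\<lambda>\<omega>. F (restrict (\<lambda>i. \<xi> i \<omega>) J)) \<in> measurable M N"
    by (rule measurable_compose[OF r PiM_count_measurable[OF J(1) F]])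
  moreover have "(\<lambda>\<omega>. F (restrict (\<lambda>i. \<xi> i \<omega>) J)) = (\<lambda>\<omega>. F (\<lambda>i. \<xi> i \<omega>))"
    by (intro ext dep) auto
  ultimately show ?thesis by simp
qed

lemma int_dep:
  fixes F :: "(nat \<Rightarrow> nat) \<Rightarrow> real"
  assumes J: "finite J" "J \<subseteq> {1..}" and dep: "\<And>x y. (\<forall>i\<in>J. x i = y i) \<Longrightarrow> F x = F y"
    and bnd: "\<And>x. \<bar>F x\<bar> \<le> C"
  shows "integrable M (\<lambda>\<omega>. F (\<lambda>i. \<xi> i \<omega>))"
  by (rule integrable_const_bound[where B=C]) (use bnd rv_dep[OF J dep, where N=borel] in auto)

lemma indep_exp:
  fixes F G :: "(nat \<Rightarrow> nat) \<Rightarrow> real"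
  assumes A: "finite A" "A \<subseteq> {1..}" and B: "finite B" "B \<subseteq> {1..}" and AB: "A \<inter> B = {}"
    and depF: "\<And>x y. (\<forall>i\<in>A. x i = y i) \<Longrightarrow> F x = F y"
    and depG: "\<And>x y. (\<forall>i\<in>B. x i = y i) \<Longrightarrow> G x = G y"
    and bF: "\<And>x. \<bar>F x\<bar> \<le> C1" and bG: "\<And>x. \<bar>G x\<bar> \<le> C2"
  shows "(\<integral>\<omega>. F (\<lambda>i. \<xi> i \<omega>) * G (\<lambda>i. \<xi> i \<omega>) \<partial>M)
       = (\<integral>\<omega>. F (\<lambda>i. \<xi> i \<omega>) \<partial>M) * (\<integral>\<omega>. G (\<lambda>i. \<xi> i \<omega>) \<partial>M)"
proof -
  have iv: "indep_var (PiM A (\<lambda>_. count_space UNIV)) (\<lambda>\<omega>. restrict (\<lambda>i. \<xi> i \<omega>) A)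
                      (PiM B (\<lambda>_. count_space UNIV)) (\<lambda>\<omega>. restrict (\<lambda>i. \<xi> i \<omega>) B)"
    using AB A B by (intro indep_var_restrict[OF indep]) auto
  have iv2: "indep_var borel (F \<circ> (\<lambda>\<omega>. restrict (\<lambda>i. \<xi> i \<omega>) A)) borel (G \<circ> (\<lambda>\<omega>. restrict (\<lambda>i. \<xi> i \<omega>) B))"
    by (rule indep_var_compose[OF iv PiM_count_measurable[OF A(1)] PiM_count_measurable[OF B(1)]]) auto
  have eF: "F \<circ> (\<lambda>\<omega>. restrict (\<lambda>i. \<xi> i \<omega>) A) = (\<lambda>\<omega>. F (\<lambda>i. \<xi> i \<omega>))"
    by (intro ext) (auto intro: depF)
  have eG: "G \<circ> (\<lambda>\<omega>. restrict (\<lambda>i. \<xi> i \<omega>) B) = (\<lambda>\<omega>. G (\<lambda>i. \<xi> i \<omega>))"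
    by (intro ext) (auto intro: depG)
  show ?thesis
    by (rule indep_var_lebesgue_integral[OF iv2[unfolded eF eG]])
       (auto intro: int_dep[OF A depF bF] int_dep[OF B depG bG])
qed

lemma exp_prod:
  assumes K: "finite K" "K \<subseteq> {1..}"
  shows "(\<integral>\<omega>. real (\<Prod>i\<in>K. eta (\<xi> i \<omega>)) \<partial>M) = p ^ card K"
proof (cases "K = {}")
  case True then show ?thesis by (simp add: prob_space)
next
  case False
  define E where "E = (\<Inter>i\<in>K. \<xi> i -` {1} \<inter> space M)"
  have Ei: "\<xi> i -` {1} \<inter> space M \<in> sets M" if "i \<in> K" for i
    using rv_xi[of i] that K by (auto intro: measurable_sets)
  have Es: "E \<in> sets M" unfolding E_def using Ei False K by (intro sets.finite_INT) auto
  have "(\<integral>\<omega>. real (\<Prod>i\<in>K. eta (\<xi> i \<omega>)) \<partial>M) = (\<integral>\<omega>. indicator E \<omega> \<partial>M)"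
  proof (rule Bochner_Integration.integral_cong[OF refl])
    fix \<omega> assume w: "\<omega> \<in> space M"
    show "real (\<Prod>i\<in>K. eta (\<xi> i \<omega>)) = indicator E \<omega>"
    proof (cases "\<forall>i\<in>K. \<xi> i \<omega> = 1")
      case True then show ?thesis using w by (simp add: E_def eta_def indicator_def)
    next
      case False
      then obtain i where "i \<in> K" "\<xi> i \<omega> \<noteq> 1" by auto
      then have "(\<Prod>i\<in>K. eta (\<xi> i \<omega>)) = 0" using K by (intro prod_zero) (auto simp: eta_def)
      moreover have "\<omega> \<notin> E" using \<open>i \<in> K\<close> \<open>\<xi> i \<omega> \<noteq> 1\<close> by (auto simp: E_def)
      ultimately show ?thesis by simp
    qed
  qed
  also have "\<dots> = prob E" using Es by simp
  also have "\<dots> = (\<Prod>i\<in>K. prob (\<xi> i -` {1} \<inter> space M))"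
    unfolding E_def by (rule indep_varsD[OF indep False K(1) K(2)]) simp
  also have "\<dots> = (\<Prod>i\<in>K. p)"
  proof (rule prod.cong[OF refl])
    fix i assume "i \<in> K"
    then have "i \<ge> 1" using K by auto
    moreover have "\<xi> i -` {1} \<inter> space M = {\<omega> \<in> space M. \<xi> i \<omega> = 1}" by auto
    ultimately show "prob (\<xi> i -` {1} \<inter> space M) = p" using bern by simp
  qed
  also have "\<dots> = p ^ card K" by simp
  finally show ?thesis .
qed


definition nX :: "nat \<Rightarrow> (nat \<Rightarrow> nat) \<Rightarrow> nat" where "nX l x = (\<Prod>i\<in>Ix l. eta (x i))"
definition nW :: "(nat \<Rightarrow> nat) \<Rightarrow> nat" where "nW x = (\<Sum>l\<in>{1..n}. nX l x)"
definition nY :: "nat \<Rightarrow> (nat \<Rightarrow> nat) \<Rightarrow> nat" where "nY l x = (\<Sum>k\<in>Bset l - {l}. nX k x)"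
definition nZ :: "nat \<Rightarrow> (nat \<Rightarrow> nat) \<Rightarrow> nat" where "nZ l x = (\<Sum>k\<in>{1..n} - Bset l. nX k x)"
definition Iall :: "nat set" where "Iall = (\<Union>l\<in>{1..n}. Ix l)"
definition Jz :: "nat \<Rightarrow> nat set" where "Jz l = (\<Union>k\<in>{1..n} - Bset l. Ix k)"

lemma Iall_fin: "finite Iall" unfolding Iall_def by (simp add: Ix_finite)
lemma Iall_sub: "Iall \<subseteq> {1..}" unfolding Iall_def using Ix_sub by (force simp: subset_iff)
lemma Jz_fin: "finite (Jz l)" unfolding Jz_def by (simp add: Ix_finite)
lemma Jz_sub: "Jz l \<subseteq> {1..}" unfolding Jz_def using Ix_sub by (force simp: subset_iff)
lemma Jz_disj: "Ix l \<inter> Jz l = {}" unfolding Jz_def Bset_def by auto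
lemma Ix_Iall: "k \<in> {1..n} \<Longrightarrow> Ix k \<subseteq> Iall" unfolding Iall_def by auto

lemma nX_01: "nX l x = 0 \<or> nX l x = 1" unfolding nX_def by (rule prod_eta_01)
lemma nX_le1: "nX l x \<le> 1" unfolding nX_def by (rule prod_eta_le1)

lemma nX_dep: "Ix l \<subseteq> J \<Longrightarrow> \<forall>i\<in>J. x i = y i \<Longrightarrow> nX l x = nX l y"
  unfolding nX_def by (intro prod.cong) auto

lemma nW_dep: "\<forall>i\<in>Iall. x i = y i \<Longrightarrow> nW x = nW y"
  unfolding nW_def by (intro sum.cong refl nX_dep[OF Ix_Iall]) auto
lemma nY_dep: "\<forall>i\<in>Iall. x i = y i \<Longrightarrow> nY l x = nY l y"
  unfolding nY_def using Bset_mem by (intro sum.cong refl nX_dep[OF Ix_Iall]) auto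
lemma nZ_dep: "\<forall>i\<in>Jz l. x i = y i \<Longrightarrow> nZ l x = nZ l y"
  unfolding nZ_def Jz_def by (intro sum.cong refl nX_dep[of _ "Jz l"]) (auto simp: Jz_def)

lemma sum_nX_le: "A \<subseteq> {1..n} \<Longrightarrow> (\<Sum>k\<in>A. nX k x) \<le> n"
proof -
  assume A: "A \<subseteq> {1..n}"
  have "(\<Sum>k\<in>A. nX k x) \<le> (\<Sum>k\<in>A. 1)" by (rule sum_mono) (rule nX_le1)
  also have "\<dots> = card A" by simp
  also have "\<dots> \<le> card {1..n}" using A by (intro card_mono) auto
  finally show ?thesis by simp
qed

lemma nW_le: "nW x \<le> n" unfolding nW_def by (rule sum_nX_le) auto
lemma nY_le: "nY l x \<le> n" unfolding nY_def using Bset_sub by (intro sum_nX_le) auto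
lemma nZ_le: "nZ l x \<le> n" unfolding nZ_def by (intro sum_nX_le) auto

lemma nW_split:
  assumes l: "l \<in> {1..n}"
  shows "nW x = nX l x + nY l x + nZ l x"
proof -
  have "{1..n} = insert l ((Bset l - {l}) \<union> ({1..n} - Bset l))"
    using l l_in_Bset[OF l] Bset_mem by auto
  then have "nW x = (\<Sum>k\<in>insert l ((Bset l - {l}) \<union> ({1..n} - Bset l)). nX k x)"
    unfolding nW_def by simp
  also have "\<dots> = nX l x + ((\<Sum>k\<in>Bset l - {l}. nX k x) + (\<Sum>k\<in>{1..n} - Bset l. nX k x))"
  proof -
    have fin: "finite (Bset l)" using Bset_sub by (rule finite_subset) simp
    show ?thesis using fin l_in_Bset[OF l] by (subst sum.insert) (auto intro!: sum.union_disjoint)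
  qed
  finally show ?thesis unfolding nY_def nZ_def by simp
qed

lemma nXY_sum:
  assumes l: "l \<in> {1..n}"
  shows "nX l x + nY l x = (\<Sum>k\<in>Bset l. nX k x)"
proof -
  have fin: "finite (Bset l)" using Bset_sub by (rule finite_subset) simp
  show ?thesis unfolding nY_def
    using sum.remove[OF fin l_in_Bset[OF l], of "\<lambda>k. nX k x"] by simp
qed

lemma exp_nX: "k \<in> {1..n} \<Longrightarrow> (\<integral>\<omega>. real (nX k (\<lambda>i. \<xi> i \<omega>)) \<partial>M) = p ^ ell"
  unfolding nX_def using exp_prod[OF Ix_finite Ix_sub, of k] card_Ix[of k] by simp

lemma card_union_ge:
  assumes k: "k \<in> {1..n}" and l: "l \<in> {1..n}" and kl: "k \<noteq> l"
  shows "card (Ix l \<union> Ix k) \<ge> ell + 1"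
proof -
  have ne: "Ix k \<noteq> Ix l" using Ix_inj[of k l] k l kl by auto
  have "\<not> Ix k \<subseteq> Ix l"
  proof
    assume "Ix k \<subseteq> Ix l"
    then have "Ix k = Ix l" using card_Ix k l by (intro card_subset_eq Ix_finite) auto
    then show False using ne by simp
  qed
  then have "Ix l \<subset> Ix l \<union> Ix k" by auto
  then have "card (Ix l) < card (Ix l \<union> Ix k)" by (intro psubset_card_mono) (auto simp: Ix_finite)
  then show ?thesis using card_Ix l by simp
qed

lemma exp_nXnX:
  assumes k: "k \<in> {1..n}" and l: "l \<in> {1..n}" and kl: "k \<noteq> l"
  shows "(\<integral>\<omega>. real (nX l (\<lambda>i. \<xi> i \<omega>)) * real (nX k (\<lambda>i. \<xi> i \<omega>)) \<partial>M) \<le> p ^ (ell + 1)"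
proof -
  have "(\<integral>\<omega>. real (nX l (\<lambda>i. \<xi> i \<omega>)) * real (nX k (\<lambda>i. \<xi> i \<omega>)) \<partial>M)
      = (\<integral>\<omega>. real (\<Prod>i\<in>Ix l \<union> Ix k. eta (\<xi> i \<omega>)) \<partial>M)"
    unfolding nX_def of_nat_mult[symmetric] prod_eta_Un[OF Ix_finite Ix_finite] ..
  also have "\<dots> = p ^ card (Ix l \<union> Ix k)"
    using Ix_sub k l by (intro exp_prod) (auto simp: Ix_finite)
  also have "\<dots> \<le> p ^ (ell + 1)"
    using card_union_ge[OF k l kl] p_pos p_lt1 by (intro power_decreasing) auto
  finally show ?thesis .
qed


lemma Jz_Iall: "Jz l \<subseteq> Iall" unfolding Jz_def Iall_def by auto

lemma nZ_dep': "\<forall>i\<in>Iall. x i = y i \<Longrightarrow> nZ l x = nZ l y"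
  using Jz_Iall by (intro nZ_dep) auto

lemma nX_dep': "k \<in> {1..n} \<Longrightarrow> \<forall>i\<in>Iall. x i = y i \<Longrightarrow> nX k x = nX k y"
  by (rule nX_dep[OF Ix_Iall])

lemma intI:
  fixes F :: "(nat \<Rightarrow> nat) \<Rightarrow> real"
  assumes "\<And>x y. (\<forall>i\<in>Iall. x i = y i) \<Longrightarrow> F x = F y" "\<And>x. \<bar>F x\<bar> \<le> C"
  shows "integrable M (\<lambda>\<omega>. F (\<lambda>i. \<xi> i \<omega>))"
  by (rule int_dep[OF Iall_fin Iall_sub assms])

lemma abs_bound2:
  fixes al be u v w C :: real
  assumes "0 \<le> al" "al \<le> 1" "0 \<le> be" "be \<le> 1" "\<bar>u\<bar> \<le> C" "\<bar>v\<bar> \<le> C" "\<bar>w\<bar> \<le> C"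
  shows "\<bar>al * (u - v) + be * (v - w)\<bar> \<le> 4 * C" "\<bar>al * v - be * v\<bar> \<le> 2 * C"
proof -
  have "\<bar>al * (u - v)\<bar> \<le> 1 * \<bar>u - v\<bar>" unfolding abs_mult using assms by (intro mult_right_mono) auto
  moreover have "\<bar>be * (v - w)\<bar> \<le> 1 * \<bar>v - w\<bar>" unfolding abs_mult using assms by (intro mult_right_mono) auto
  moreover have "\<bar>al * (u - v) + be * (v - w)\<bar> \<le> \<bar>al * (u - v)\<bar> + \<bar>be * (v - w)\<bar>" by (rule abs_triangle_ineq)
  moreover have "\<bar>u - v\<bar> \<le> \<bar>u\<bar> + \<bar>v\<bar>" "\<bar>v - w\<bar> \<le> \<bar>v\<bar> + \<bar>w\<bar>" by (rule abs_triangle_ineq4)+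
  ultimately show "\<bar>al * (u - v) + be * (v - w)\<bar> \<le> 4 * C" using assms by linarith
  have "\<bar>al * v\<bar> \<le> 1 * \<bar>v\<bar>" unfolding abs_mult using assms by (intro mult_right_mono) auto
  moreover have "\<bar>be * v\<bar> \<le> 1 * \<bar>v\<bar>" unfolding abs_mult using assms by (intro mult_right_mono) auto
  moreover have "\<bar>al * v - be * v\<bar> \<le> \<bar>al * v\<bar> + \<bar>be * v\<bar>" by (rule abs_triangle_ineq4)
  ultimately show "\<bar>al * v - be * v\<bar> \<le> 2 * C" using assms by linarith
qed

lemma stein_main:
  "\<bar>prob {\<omega> \<in> space M. nW (\<lambda>i. \<xi> i \<omega>) \<in> \<Gamma>} - poisson_prob (real n * p ^ ell) \<Gamma>\<bar> \<le> 2 * real ell ^ 2 * p"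
proof -
  define \<mu> where "\<mu> = real n * p ^ ell"
  have mu: "\<mu> > 0" unfolding \<mu>_def using n_pos p_pos by simp
  define a where "a = poisson_prob \<mu> \<Gamma>"
  define g where "g = Gs \<mu> \<Gamma> a"
  define D where "D = 1 / \<mu>"
  define pl where "pl = p ^ ell"
  have pl: "0 \<le> pl" "pl \<le> 1" unfolding pl_def using p_pos p_lt1 by (auto intro: power_le_one)
  have gd: "\<bar>g (Suc (Suc m)) - g (Suc m)\<bar> \<le> D" for m
    unfolding g_def D_def a_def by (rule Gs_poisson_delta[OF mu])
  define Cg where "Cg = (\<Sum>k\<le>n+1. \<bar>g k\<bar>)"
  have gb: "\<bar>g k\<bar> \<le> Cg" if "k \<le> n + 1" for k
    unfolding Cg_def using that by (intro member_le_sum) auto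
  have gW: "\<bar>g (nW x + 1)\<bar> \<le> Cg" "\<bar>g (nW x)\<bar> \<le> Cg" "\<bar>g (nZ l x + 1)\<bar> \<le> Cg" for x l
    using gb nW_le[of x] nZ_le[of l x] by auto
  have a01: "0 \<le> a" "a \<le> 1" unfolding a_def poisson_prob_def by auto
  define A1 where "A1 l x = pl * g (nZ l x + 1) - real (nX l x) * g (nZ l x + 1)" for l x
  define A2 where "A2 l x = pl * (g (nW x + 1) - g (nZ l x + 1)) + real (nX l x) * (g (nZ l x + 1) - g (nW x))" for l x
  define Phi where "Phi x = (if nW x \<in> \<Gamma> then 1 else 0) - a" for x
  have Xr: "0 \<le> real (nX l x)" "real (nX l x) \<le> 1" for l x using nX_le1[of l x] by auto

  have iA1: "integrable M (\<lambda>\<omega>. A1 l (\<lambda>i. \<xi> i \<omega>))" if l: "l \<in> {1..n}" for l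
  proof (rule intI)
    show "\<bar>A1 l x\<bar> \<le> 2 * Cg" for x unfolding A1_def by (rule abs_bound2(2)[OF pl Xr gW(3) gW(3) gW(3)])
    show "A1 l x = A1 l y" if "\<forall>i\<in>Iall. x i = y i" for x y
      unfolding A1_def using nZ_dep'[OF that] nX_dep'[OF l that] by simp
  qed
  have iA2: "integrable M (\<lambda>\<omega>. A2 l (\<lambda>i. \<xi> i \<omega>))" if l: "l \<in> {1..n}" for l
  proof (rule intI)
    show "\<bar>A2 l x\<bar> \<le> 4 * Cg" for x unfolding A2_def by (rule abs_bound2(1)[OF pl Xr gW(1) gW(3) gW(2)])
    show "A2 l x = A2 l y" if "\<forall>i\<in>Iall. x i = y i" for x y
      unfolding A2_def using nZ_dep'[OF that] nX_dep'[OF l that] nW_dep[OF that] by simp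
  qed
  have iX: "integrable M (\<lambda>\<omega>. real (nX k (\<lambda>i. \<xi> i \<omega>)))" if k: "k \<in> {1..n}" for k
    by (rule intI[where C=1]) (use nX_dep'[OF k] Xr in auto)
  have iXX: "integrable M (\<lambda>\<omega>. real (nX l (\<lambda>i. \<xi> i \<omega>)) * real (nX k (\<lambda>i. \<xi> i \<omega>)))"
    if k: "k \<in> {1..n}" and l: "l \<in> {1..n}" for k l
  proof (rule intI[where C=1])
    show "real (nX l x) * real (nX k x) = real (nX l y) * real (nX k y)" if "\<forall>i\<in>Iall. x i = y i" for x y
      using nX_dep'[OF k that] nX_dep'[OF l that] by simp
    show "\<bar>real (nX l x) * real (nX k x)\<bar> \<le> 1" for x
      using Xr[of l x] Xr[of k x] by (simp add: mult_le_one)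
  qed

  have dec: "Phi x = (\<Sum>l\<in>{1..n}. A1 l x + A2 l x)" for x
  proof -
    have "Phi x = \<mu> * g (Suc (nW x)) - real (nW x) * g (nW x)"
      unfolding Phi_def g_def using stein_eq[OF mu, of \<Gamma> a "nW x"] by simp
    also have "\<dots> = (\<Sum>l\<in>{1..n}. pl * g (nW x + 1) - real (nX l x) * g (nW x))"
      unfolding \<mu>_def pl_def nW_def sum_subtractf of_nat_sum sum_distrib_right by simp
    also have "\<dots> = (\<Sum>l\<in>{1..n}. A1 l x + A2 l x)"
      unfolding A1_def A2_def by (intro sum.cong refl) (simp add: algebra_simps)
    finally show ?thesis .
  qed

  have setS: "{\<omega> \<in> space M. nW (\<lambda>i. \<xi> i \<omega>) \<in> \<Gamma>} \<in> sets M"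
  proof -
    have "(\<lambda>\<omega>. nW (\<lambda>i. \<xi> i \<omega>)) \<in> measurable M (count_space UNIV)"
      by (rule rv_dep[OF Iall_fin Iall_sub]) (auto intro: nW_dep)
    then show ?thesis by (rule measurable_sets_Collect) simp
  qed
  have EPhi: "(\<integral>\<omega>. Phi (\<lambda>i. \<xi> i \<omega>) \<partial>M) = prob {\<omega> \<in> space M. nW (\<lambda>i. \<xi> i \<omega>) \<in> \<Gamma>} - a"
  proof -
    have "(\<integral>\<omega>. Phi (\<lambda>i. \<xi> i \<omega>) \<partial>M) = (\<integral>\<omega>. indicator {\<omega> \<in> space M. nW (\<lambda>i. \<xi> i \<omega>) \<in> \<Gamma>} \<omega> - a \<partial>M)"
      by (rule Bochner_Integration.integral_cong[OF refl]) (auto simp: Phi_def indicator_def)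
    also have "\<dots> = prob {\<omega> \<in> space M. nW (\<lambda>i. \<xi> i \<omega>) \<in> \<Gamma>} - a"
      using setS by (subst Bochner_Integration.integral_diff) (auto simp: prob_space less_top[symmetric] intro!: integrable_real_indicator)
    finally show ?thesis .
  qed
  have EPhi2: "(\<integral>\<omega>. Phi (\<lambda>i. \<xi> i \<omega>) \<partial>M)
      = (\<Sum>l\<in>{1..n}. (\<integral>\<omega>. A1 l (\<lambda>i. \<xi> i \<omega>) \<partial>M) + (\<integral>\<omega>. A2 l (\<lambda>i. \<xi> i \<omega>) \<partial>M))"
    unfolding dec using iA1 iA2
    by (subst Bochner_Integration.integral_sum) (auto intro!: sum.cong Bochner_Integration.integral_add)

  have EA1: "(\<integral>\<omega>. A1 l (\<lambda>i. \<xi> i \<omega>) \<partial>M) = 0" if l: "l \<in> {1..n}" for l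
  proof -
    define G where "G x = g (nZ l x + 1)" for x
    have iG: "integrable M (\<lambda>\<omega>. G (\<lambda>i. \<xi> i \<omega>))"
    proof (rule intI[where C=Cg])
      show "G x = G y" if "\<forall>i\<in>Iall. x i = y i" for x y unfolding G_def using nZ_dep'[OF that, of l] by simp
      show "\<bar>G x\<bar> \<le> Cg" for x unfolding G_def by (rule gW)
    qed
    have ind: "(\<integral>\<omega>. real (nX l (\<lambda>i. \<xi> i \<omega>)) * G (\<lambda>i. \<xi> i \<omega>) \<partial>M)
        = (\<integral>\<omega>. real (nX l (\<lambda>i. \<xi> i \<omega>)) \<partial>M) * (\<integral>\<omega>. G (\<lambda>i. \<xi> i \<omega>) \<partial>M)"
    proof (rule indep_exp[OF Ix_finite Ix_sub Jz_fin Jz_sub Jz_disj])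
      show "l \<ge> 1" using l by simp
      show "real (nX l x) = real (nX l y)" if "\<forall>i\<in>Ix l. x i = y i" for x y
        using nX_dep[OF subset_refl that] by simp
      show "G x = G y" if "\<forall>i\<in>Jz l. x i = y i" for x y
        unfolding G_def using nZ_dep[OF that] by simp
      show "\<bar>real (nX l x)\<bar> \<le> 1" for x using Xr[of l x] by simp
      show "\<bar>G x\<bar> \<le> Cg" for x unfolding G_def by (rule gW)
    qed
    have iXG: "integrable M (\<lambda>\<omega>. real (nX l (\<lambda>i. \<xi> i \<omega>)) * G (\<lambda>i. \<xi> i \<omega>))"
    proof (rule intI[where C=Cg])
      show "real (nX l x) * G x = real (nX l y) * G y" if "\<forall>i\<in>Iall. x i = y i" for x y
        unfolding G_def using nZ_dep'[OF that, of l] nX_dep'[OF l that] by simp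
      show "\<bar>real (nX l x) * G x\<bar> \<le> Cg" for x
      proof -
        have "\<bar>real (nX l x) * G x\<bar> \<le> 1 * \<bar>G x\<bar>" unfolding abs_mult using Xr[of l x]
          by (intro mult_right_mono) auto
        then show ?thesis using gW(3)[of l x] unfolding G_def by simp
      qed
    qed
    have A1G: "A1 l x = pl * G x - real (nX l x) * G x" for x unfolding A1_def G_def by simp
    have "(\<integral>\<omega>. A1 l (\<lambda>i. \<xi> i \<omega>) \<partial>M)
        = pl * (\<integral>\<omega>. G (\<lambda>i. \<xi> i \<omega>) \<partial>M) - (\<integral>\<omega>. real (nX l (\<lambda>i. \<xi> i \<omega>)) * G (\<lambda>i. \<xi> i \<omega>) \<partial>M)"
      unfolding A1G using iG iXG by (subst Bochner_Integration.integral_diff) (auto intro!: integrable_mult_right)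
    also have "\<dots> = 0" unfolding ind exp_nX[OF l] pl_def by simp
    finally show ?thesis .
  qed

  have EA2: "\<bar>\<integral>\<omega>. A2 l (\<lambda>i. \<xi> i \<omega>) \<partial>M\<bar> \<le> D * (pl * (real ell ^ 2 * pl) + real ell ^ 2 * (pl * p))"
    if l: "l \<in> {1..n}" for l
  proof -
    define B where "B = Bset l"
    have finB: "finite B" unfolding B_def using Bset_sub by (rule finite_subset) simp
    have Bn: "k \<in> {1..n}" if "k \<in> B" for k using Bset_mem that unfolding B_def by auto
    have Dpos: "D \<ge> 0" unfolding D_def using mu by simp
    define H where "H x = D * pl * (\<Sum>k\<in>B. real (nX k x)) + D * (\<Sum>k\<in>B - {l}. real (nX l x) * real (nX k x))" for x
    have ptw: "\<bar>A2 l x\<bar> \<le> H x" for x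
    proof -
      define X where "X = nX l x"
      define Y where "Y = nY l x"
      define Z where "Z = nZ l x"
      have W: "nW x = X + Y + Z" unfolding X_def Y_def Z_def by (rule nW_split[OF l])
      have b1: "\<bar>g (nW x + 1) - g (nZ l x + 1)\<bar> \<le> D * real (X + Y)"
      proof -
        have "nW x + 1 = Suc Z + (X + Y)" using W by simp
        then show ?thesis using Lip_nat2(1)[of g D Z "X + Y", OF gd] unfolding Z_def by simp
      qed
      have b2: "\<bar>real X * (g (nZ l x + 1) - g (nW x))\<bar> \<le> D * (real X * real Y)"
      proof (cases "X = 0")
        case True then show ?thesis by simp
      next
        case False
        then have X1: "X = 1" using nX_01[of l x] unfolding X_def by auto
        then have "nW x = Suc Z + Y" using W by simp
        then show ?thesis using Lip_nat2(2)[of g D Z Y, OF gd] X1 unfolding Z_def by simp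
      qed
      have t: "\<bar>A2 l x\<bar> \<le> \<bar>pl * (g (nW x + 1) - g (nZ l x + 1))\<bar> + \<bar>real X * (g (nZ l x + 1) - g (nW x))\<bar>"
        unfolding A2_def X_def by (rule abs_triangle_ineq)
      have b1': "\<bar>pl * (g (nW x + 1) - g (nZ l x + 1))\<bar> \<le> pl * (D * real (X + Y))"
        unfolding abs_mult using pl b1 by (simp add: mult_left_mono)
      have e1: "real (X + Y) = (\<Sum>k\<in>B. real (nX k x))"
        unfolding X_def Y_def B_def of_nat_sum[symmetric] nXY_sum[OF l] ..
      have e2: "real X * real Y = (\<Sum>k\<in>B - {l}. real (nX l x) * real (nX k x))"
        unfolding X_def Y_def nY_def B_def of_nat_sum sum_distrib_left ..
      have "\<bar>A2 l x\<bar> \<le> pl * (D * real (X + Y)) + D * (real X * real Y)"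
        using t b1' b2 by linarith
      also have "\<dots> = H x" unfolding H_def e1 e2 by (simp add: algebra_simps)
      finally show ?thesis .
    qed
    have iH1: "integrable M (\<lambda>\<omega>. real (nX k (\<lambda>i. \<xi> i \<omega>)))" if "k \<in> B" for k
      using iX Bn that by auto
    have iH2: "integrable M (\<lambda>\<omega>. real (nX l (\<lambda>i. \<xi> i \<omega>)) * real (nX k (\<lambda>i. \<xi> i \<omega>)))" if "k \<in> B - {l}" for k
      using iXX Bn that l by auto
    have iH: "integrable M (\<lambda>\<omega>. H (\<lambda>i. \<xi> i \<omega>))"
      unfolding H_def using iH1 iH2 by (intro Bochner_Integration.integrable_add integrable_mult_right
        Bochner_Integration.integrable_sum) auto
    have EH: "(\<integral>\<omega>. H (\<lambda>i. \<xi> i \<omega>) \<partial>M) = D * pl * (\<Sum>k\<in>B. (\<integral>\<omega>. real (nX k (\<lambda>i. \<xi> i \<omega>)) \<partial>M))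
        + D * (\<Sum>k\<in>B - {l}. (\<integral>\<omega>. real (nX l (\<lambda>i. \<xi> i \<omega>)) * real (nX k (\<lambda>i. \<xi> i \<omega>)) \<partial>M))"
      unfolding H_def using iH1 iH2
      by (subst Bochner_Integration.integral_add)
         (auto intro!: integrable_mult_right Bochner_Integration.integrable_sum
               simp: Bochner_Integration.integral_sum)
    have s1: "(\<Sum>k\<in>B. (\<integral>\<omega>. real (nX k (\<lambda>i. \<xi> i \<omega>)) \<partial>M)) \<le> real ell ^ 2 * pl"
    proof -
      have "(\<Sum>k\<in>B. (\<integral>\<omega>. real (nX k (\<lambda>i. \<xi> i \<omega>)) \<partial>M)) = real (card B) * pl"
        using exp_nX Bn unfolding pl_def by simp
      also have "\<dots> \<le> real ell ^ 2 * pl"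
        using card_Bset[of l] l pl unfolding B_def by (intro mult_right_mono) (auto simp flip: of_nat_power)
      finally show ?thesis .
    qed
    have s2: "(\<Sum>k\<in>B - {l}. (\<integral>\<omega>. real (nX l (\<lambda>i. \<xi> i \<omega>)) * real (nX k (\<lambda>i. \<xi> i \<omega>)) \<partial>M))
        \<le> real ell ^ 2 * (pl * p)"
    proof -
      have "(\<Sum>k\<in>B - {l}. (\<integral>\<omega>. real (nX l (\<lambda>i. \<xi> i \<omega>)) * real (nX k (\<lambda>i. \<xi> i \<omega>)) \<partial>M))
          \<le> (\<Sum>k\<in>B - {l}. p ^ (ell + 1))"
        using exp_nXnX Bn l by (intro sum_mono) auto
      also have "\<dots> = real (card (B - {l})) * (pl * p)" unfolding pl_def by simp
      also have "\<dots> \<le> real ell ^ 2 * (pl * p)"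
      proof -
        have "card (B - {l}) \<le> card B" using finB by (intro card_mono) auto
        then have "card (B - {l}) \<le> ell ^ 2" using card_Bset[of l] l unfolding B_def by auto
        then show ?thesis using pl p_pos by (intro mult_right_mono) (auto simp flip: of_nat_power)
      qed
      finally show ?thesis .
    qed
    have "\<bar>\<integral>\<omega>. A2 l (\<lambda>i. \<xi> i \<omega>) \<partial>M\<bar> \<le> (\<integral>\<omega>. \<bar>A2 l (\<lambda>i. \<xi> i \<omega>)\<bar> \<partial>M)"
      by (rule integral_abs_bound)
    also have "\<dots> \<le> (\<integral>\<omega>. H (\<lambda>i. \<xi> i \<omega>) \<partial>M)"
      using iH ptw iA2[OF l] by (intro integral_mono) auto
    also have "\<dots> \<le> D * pl * (real ell ^ 2 * pl) + D * (real ell ^ 2 * (pl * p))"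
      unfolding EH using s1 s2 Dpos pl by (intro add_mono mult_left_mono) auto
    finally show ?thesis by (simp add: algebra_simps)
  qed

  have "\<bar>prob {\<omega> \<in> space M. nW (\<lambda>i. \<xi> i \<omega>) \<in> \<Gamma>} - a\<bar> = \<bar>\<Sum>l\<in>{1..n}. (\<integral>\<omega>. A2 l (\<lambda>i. \<xi> i \<omega>) \<partial>M)\<bar>"
    unfolding EPhi[symmetric] EPhi2 using EA1 by simp
  also have "\<dots> \<le> (\<Sum>l\<in>{1..n}. \<bar>\<integral>\<omega>. A2 l (\<lambda>i. \<xi> i \<omega>) \<partial>M\<bar>)" by (rule sum_abs)
  also have "\<dots> \<le> (\<Sum>l\<in>{1..n}. D * (pl * (real ell ^ 2 * pl) + real ell ^ 2 * (pl * p)))"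
    by (rule sum_mono) (rule EA2)
  also have "\<dots> = real n * D * pl * (real ell ^ 2 * (pl + p))" by (simp add: algebra_simps)
  also have "real n * D * pl = 1" unfolding D_def \<mu>_def pl_def using n_pos p_pos by simp
  also have "1 * (real ell ^ 2 * (pl + p)) \<le> 2 * real ell ^ 2 * p"
  proof -
    have "pl \<le> p ^ 1" unfolding pl_def using p_pos p_lt1 ell by (intro power_decreasing) auto
    then have "pl * (real ell)\<^sup>2 \<le> p * (real ell)\<^sup>2" by (simp add: mult_right_mono)
    then show ?thesis by (simp add: algebra_simps)
  qed
  finally show ?thesis unfolding a_def \<mu>_def .
qed


lemma xi_01_AE: assumes "i \<ge> 1" shows "AE \<omega> in M. \<xi> i \<omega> \<in> {0, 1}"
proof -
  have m1: "{\<omega> \<in> space M. \<xi> i \<omega> = 1} \<in> sets M" and m0: "{\<omega> \<in> space M. \<xi> i \<omega> = 0} \<in> sets M"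
    using rv_xi[OF assms] by (auto intro!: measurable_sets_Collect)
  have "prob ({\<omega> \<in> space M. \<xi> i \<omega> = 1} \<union> {\<omega> \<in> space M. \<xi> i \<omega> = 0})
      = prob {\<omega> \<in> space M. \<xi> i \<omega> = 1} + prob {\<omega> \<in> space M. \<xi> i \<omega> = 0}"
    using m1 m0 by (intro finite_measure_Union) auto
  also have "\<dots> = 1" using bern assms by simp
  finally have "AE \<omega> in M. \<omega> \<in> {\<omega> \<in> space M. \<xi> i \<omega> = 1} \<union> {\<omega> \<in> space M. \<xi> i \<omega> = 0}"
    by (rule AE_prob_1)
  then show ?thesis by eventually_elim auto
qed

lemma S_as_prod: "S_stat ell q \<xi> n \<omega> = (\<Sum>l\<in>{1..n}. \<Prod>i\<in>Ix l. \<xi> i \<omega>)"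
  unfolding S_stat_def Ix_def
  by (intro sum.cong refl, subst prod.reindex[OF inj_j]) auto

lemma S_eq_prob:
  "prob {\<omega> \<in> space M. S_stat ell q \<xi> n \<omega> \<in> \<Gamma>} = prob {\<omega> \<in> space M. nW (\<lambda>i. \<xi> i \<omega>) \<in> \<Gamma>}"
proof (rule measure_eq_AE)
  have "AE \<omega> in M. \<forall>i\<in>Iall. \<xi> i \<omega> \<in> {0, 1}"
    using Iall_fin Iall_sub xi_01_AE by (intro AE_finite_allI) auto
  then show "AE \<omega> in M. (\<omega> \<in> {\<omega> \<in> space M. S_stat ell q \<xi> n \<omega> \<in> \<Gamma>}) = (\<omega> \<in> {\<omega> \<in> space M. nW (\<lambda>i. \<xi> i \<omega>) \<in> \<Gamma>})"
  proof eventually_elim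
    case (elim \<omega>)
    have "S_stat ell q \<xi> n \<omega> = nW (\<lambda>i. \<xi> i \<omega>)"
      unfolding S_as_prod nW_def nX_def
    proof (intro sum.cong refl prod.cong)
      fix l i assume "l \<in> {1..n}" "i \<in> Ix l"
      then have "i \<in> Iall" unfolding Iall_def by auto
      then show "\<xi> i \<omega> = eta (\<xi> i \<omega>)" using elim by (auto simp: eta_def)
    qed
    then show ?case by simp
  qed
  have "(\<lambda>\<omega>. S_stat ell q \<xi> n \<omega>) \<in> measurable M (count_space UNIV)"
  proof -
    have "(\<lambda>\<omega>. (\<lambda>x. \<Sum>l\<in>{1..n}. \<Prod>i\<in>Ix l. x i) (\<lambda>i. \<xi> i \<omega>)) \<in> measurable M (count_space UNIV)"
      by (rule rv_dep[OF Iall_fin Iall_sub])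
         (auto intro!: sum.cong prod.cong simp: Iall_def)
    then show ?thesis unfolding S_as_prod by simp
  qed
  then show "{\<omega> \<in> space M. S_stat ell q \<xi> n \<omega> \<in> \<Gamma>} \<in> sets M"
    by (rule measurable_sets_Collect) simp
  have "(\<lambda>\<omega>. nW (\<lambda>i. \<xi> i \<omega>)) \<in> measurable M (count_space UNIV)"
    by (rule rv_dep[OF Iall_fin Iall_sub]) (auto intro: nW_dep)
  then show "{\<omega> \<in> space M. nW (\<lambda>i. \<xi> i \<omega>) \<in> \<Gamma>} \<in> sets M"
    by (rule measurable_sets_Collect) simp
qed

lemma S_meas: "(\<lambda>\<omega>. real (S_stat ell q \<xi> n \<omega>)) \<in> borel_measurable M"
proof -
  have "(\<lambda>\<omega>. (\<lambda>x. real (\<Sum>l\<in>{1..n}. \<Prod>i\<in>Ix l. x i)) (\<lambda>i. \<xi> i \<omega>)) \<in> borel_measurable M"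
    by (rule rv_dep[OF Iall_fin Iall_sub])
       (auto intro!: arg_cong[where f=real] sum.cong prod.cong simp: Iall_def)
  then show ?thesis unfolding S_as_prod by simp
qed

lemma final_bound:
  assumes lam: "lam > 0"
  shows "\<bar>prob {\<omega> \<in> space M. S_stat ell q \<xi> n \<omega> \<in> \<Gamma>} - poisson_prob lam \<Gamma>\<bar>
     \<le> (2 * real ell ^ 2 + 1) * p + 2 * \<bar>lam - real n * p ^ ell\<bar> * exp (max lam (real n * p ^ ell))"
proof -
  have mu: "real n * p ^ ell > 0" using n_pos p_pos by simp
  have "\<bar>prob {\<omega> \<in> space M. S_stat ell q \<xi> n \<omega> \<in> \<Gamma>} - poisson_prob lam \<Gamma>\<bar>
      \<le> \<bar>prob {\<omega> \<in> space M. nW (\<lambda>i. \<xi> i \<omega>) \<in> \<Gamma>} - poisson_prob (real n * p ^ ell) \<Gamma>\<bar>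
        + \<bar>poisson_prob (real n * p ^ ell) \<Gamma> - poisson_prob lam \<Gamma>\<bar>"
    unfolding S_eq_prob by linarith
  also have "\<dots> \<le> 2 * real ell ^ 2 * p + 2 * \<bar>lam - real n * p ^ ell\<bar> * exp (max lam (real n * p ^ ell))"
    by (intro add_mono stein_main poisson_diff[OF mu lam])
  also have "\<dots> \<le> (2 * real ell ^ 2 + 1) * p + 2 * \<bar>lam - real n * p ^ ell\<bar> * exp (max lam (real n * p ^ ell))"
    using p_pos by (simp add: algebra_simps)
  finally show ?thesis .
qed

end


theorem theorem2p1:
  fixes ell :: nat
    and q :: "nat \<Rightarrow> nat \<Rightarrow> nat"
    and p :: "nat \<Rightarrow> real"
    and M :: "nat \<Rightarrow> 'a measure"
    and \<xi> :: "nat \<Rightarrow> nat \<Rightarrow> 'a \<Rightarrow> nat"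
  assumes ell: "ell \<ge> 1"
    and q_incr: "\<forall>j\<in>{1..ell}. strict_mono_on {1..} (q j)"
    and q_first: "\<forall>l\<ge>1. l \<le> q 1 l"
    and q_chain: "\<forall>l\<ge>1. \<forall>j\<in>{1..<ell}. q j l < q (Suc j) l"
    and prob: "\<forall>n\<ge>1. prob_space (M n)"
    and p_range: "\<forall>n\<ge>1. 0 < p n \<and> p n < 1"
    and indep: "\<forall>n\<ge>1. prob_space.indep_vars (M n) (\<lambda>_. count_space UNIV) (\<xi> n) {1..}"
    and bern: "\<forall>n\<ge>1. \<forall>i\<ge>1.
                 measure (M n) {\<omega> \<in> space (M n). \<xi> n i \<omega> = 1} = p n \<and>
                 measure (M n) {\<omega> \<in> space (M n). \<xi> n i \<omega> = 0} = 1 - p n"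
  shows "(\<forall>lam>0. \<forall>n\<ge>1. \<forall>\<Gamma> :: nat set.
            \<bar>measure (M n) {\<omega> \<in> space (M n). S_stat ell q (\<xi> n) n \<omega> \<in> \<Gamma>} - poisson_prob lam \<Gamma>\<bar>
              \<le> (2 * real ell ^ 2 + 1) * p n
                 + 2 * \<bar>lam - real n * p n ^ ell\<bar> * exp (max lam (real n * p n ^ ell)))
       \<and> (\<forall>lam>0. (\<lambda>n. real n * p n ^ ell) \<longlonglongrightarrow> lam \<longrightarrow>
            ((\<lambda>n. (2 * real ell ^ 2 + 1) * p n
                 + 2 * \<bar>lam - real n * p n ^ ell\<bar> * exp (max lam (real n * p n ^ ell))) \<longlonglongrightarrow> 0)
            \<and> weak_conv_m (\<lambda>n. distr (M n) borel (\<lambda>\<omega>. real (S_stat ell q (\<xi> n) n \<omega>)))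
                          (distr (measure_pmf (poisson_pmf lam)) borel real))"
proof -
  have SS_inst: "SS (M n) ell q (p n) (\<xi> n) n" if n: "n \<ge> 1" for n
  proof (intro SS.intro SS_axioms.intro)
    show "prob_space (M n)" using prob n by blast
    show "1 \<le> ell" by (rule ell)
    show "\<forall>j\<in>{1..ell}. strict_mono_on {1..} (q j)" by (rule q_incr)
    show "\<forall>l\<ge>1. l \<le> q 1 l" by (rule q_first)
    show "\<forall>l\<ge>1. \<forall>j\<in>{1..<ell}. q j l < q (Suc j) l" by (rule q_chain)
    show "0 < p n" "p n < 1" using p_range n by auto
    show "prob_space.indep_vars (M n) (\<lambda>_. count_space UNIV) (\<xi> n) {1..}" using indep n by blast
    show "\<forall>i\<ge>1. measure (M n) {\<omega> \<in> space (M n). \<xi> n i \<omega> = 1} = p n \<and>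
        measure (M n) {\<omega> \<in> space (M n). \<xi> n i \<omega> = 0} = 1 - p n" using bern n by blast
    show "1 \<le> n" by (rule n)
  qed
  have part1: "\<forall>lam>0. \<forall>n\<ge>1. \<forall>\<Gamma> :: nat set.
            \<bar>measure (M n) {\<omega> \<in> space (M n). S_stat ell q (\<xi> n) n \<omega> \<in> \<Gamma>} - poisson_prob lam \<Gamma>\<bar>
              \<le> (2 * real ell ^ 2 + 1) * p n
                 + 2 * \<bar>lam - real n * p n ^ ell\<bar> * exp (max lam (real n * p n ^ ell))"
  proof (intro allI impI)
    fix lam :: real and n :: nat and \<Gamma> :: "nat set"
    assume lam: "lam > 0" and n: "n \<ge> 1"
    interpret SS "M n" ell q "p n" "\<xi> n" n
      using SS_inst n .
    show "\<bar>measure (M n) {\<omega> \<in> space (M n). S_stat ell q (\<xi> n) n \<omega> \<in> \<Gamma>} - poisson_prob lam \<Gamma>\<bar>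
              \<le> (2 * real ell ^ 2 + 1) * p n
                 + 2 * \<bar>lam - real n * p n ^ ell\<bar> * exp (max lam (real n * p n ^ ell))"
      by (rule final_bound[OF lam])
  qed
  have part2: "(\<lambda>n. (2 * real ell ^ 2 + 1) * p n
                 + 2 * \<bar>lam - real n * p n ^ ell\<bar> * exp (max lam (real n * p n ^ ell))) \<longlonglongrightarrow> 0
            \<and> weak_conv_m (\<lambda>n. distr (M n) borel (\<lambda>\<omega>. real (S_stat ell q (\<xi> n) n \<omega>)))
                          (distr (measure_pmf (poisson_pmf lam)) borel real)"
    if lam: "lam > 0" and lim: "(\<lambda>n. real n * p n ^ ell) \<longlonglongrightarrow> lam" for lam
  proof
    define bnd where "bnd n = (2 * real ell ^ 2 + 1) * p n
                 + 2 * \<bar>lam - real n * p n ^ ell\<bar> * exp (max lam (real n * p n ^ ell))" for n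
    have pl0: "(\<lambda>n. p n ^ ell) \<longlonglongrightarrow> 0"
    proof -
      have "(\<lambda>n. (real n * p n ^ ell) * inverse (real n)) \<longlonglongrightarrow> lam * 0"
        by (intro tendsto_mult lim LIMSEQ_inverse_real_of_nat_add[of 0, simplified]
            tendsto_inverse_0_at_top filterlim_real_sequentially)
      moreover have "eventually (\<lambda>n. (real n * p n ^ ell) * inverse (real n) = p n ^ ell) sequentially"
        using eventually_ge_at_top[of "1::nat"] by eventually_elim (auto simp: field_simps)
      ultimately show ?thesis by (simp add: tendsto_cong)
    qed
    have p0: "p \<longlonglongrightarrow> 0"
    proof -
      have "(\<lambda>n. root ell (p n ^ ell)) \<longlonglongrightarrow> root ell 0" by (intro tendsto_real_root pl0)
      moreover have "eventually (\<lambda>n. root ell (p n ^ ell) = p n) sequentially"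
        using eventually_ge_at_top[of "1::nat"]
        by eventually_elim (use p_range ell in \<open>auto intro!: real_root_power_cancel\<close>)
      ultimately show ?thesis by (simp add: tendsto_cong)
    qed
    have b0: "bnd \<longlonglongrightarrow> 0"
    proof -
      have "bnd \<longlonglongrightarrow> (2 * real ell ^ 2 + 1) * 0 + 2 * \<bar>lam - lam\<bar> * exp (max lam lam)"
        unfolding bnd_def by (intro tendsto_intros p0 lim)
      then show ?thesis by simp
    qed
    then show "bnd \<longlonglongrightarrow> 0" .
    show "weak_conv_m (\<lambda>n. distr (M n) borel (\<lambda>\<omega>. real (S_stat ell q (\<xi> n) n \<omega>)))
                          (distr (measure_pmf (poisson_pmf lam)) borel real)"
      unfolding weak_conv_m_def weak_conv_def
    proof (intro allI impI)
      fix x :: real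
      define G where "G = {k::nat. real k \<le> x}"
      have rhs: "cdf (distr (measure_pmf (poisson_pmf lam)) borel real) x = poisson_prob lam G"
        unfolding cdf_def poisson_prob_def G_def
        by (subst measure_distr) (auto intro!: arg_cong[where f="measure _"])
      have lhs: "cdf (distr (M n) borel (\<lambda>\<omega>. real (S_stat ell q (\<xi> n) n \<omega>))) x
          = measure (M n) {\<omega> \<in> space (M n). S_stat ell q (\<xi> n) n \<omega> \<in> G}" if n: "n \<ge> 1" for n
      proof -
        interpret SS "M n" ell q "p n" "\<xi> n" n
          using SS_inst n .
        show ?thesis unfolding cdf_def G_def
          by (subst measure_distr[OF S_meas]) (auto intro!: arg_cong[where f="measure _"])
      qed
      have "(\<lambda>n. cdf (distr (M n) borel (\<lambda>\<omega>. real (S_stat ell q (\<xi> n) n \<omega>))) x - poisson_prob lam G) \<longlonglongrightarrow> 0"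
      proof (rule Lim_null_comparison[OF _ b0])
        show "eventually (\<lambda>n. norm (cdf (distr (M n) borel (\<lambda>\<omega>. real (S_stat ell q (\<xi> n) n \<omega>))) x
            - poisson_prob lam G) \<le> bnd n) sequentially"
          using eventually_ge_at_top[of "1::nat"]
        proof eventually_elim
          case (elim n)
          show ?case unfolding lhs[OF elim] bnd_def using part1 lam elim by simp
        qed
      qed
      then show "(\<lambda>n. cdf (distr (M n) borel (\<lambda>\<omega>. real (S_stat ell q (\<xi> n) n \<omega>))) x)
          \<longlonglongrightarrow> cdf (distr (measure_pmf (poisson_pmf lam)) borel real) x"
        unfolding rhs by (rule LIM_zero_cancel)
    qed
  qed
  show ?thesis using part1 part2 by blast
qed


end
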